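(* Let $0<\alpha<\beta<1$ and $\tau=\min(\alpha,1-\beta)$. Let $p^1,\dots,p^m\in[\alpha,\beta]$ and let $v^1,\dots,v^m$ be independent with $v^j\sim D_{p^j}$, where $D_{p}$ denotes a distribution with $\Pr_{v\sim D_p}[v=0]=p$. Set $c^j=1$ if $v^j\neq0$ and $c^j=-1$ if $v^j=0$. Let $a^1,\dots,a^m\in[-1,1]$ be fixed. Then for all $\lambda\ge0$, $$\Pr\left[\sum_{j\in[m]}a^j\phi^{p^j}(c^j)\ge\lambda\right]\le e^{-\lambda^2/4m}+e^{-\sqrt\tau\lambda/4}.$$
   Context: For $p\in(0,1)$, $\phi^p:\{\pm1\}\to\mathbb{R}$ is defined by $\phi^p(1)=-\sqrt{\frac{p}{1-p}}$ and $\phi^p(-1)=\sqrt{\frac{1-p}{p}}$. *)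

theory Defs
  imports "HOL-Probability.Probability"
begin

definition phi :: "real \<Rightarrow> real \<Rightarrow> real" where
  "phi p c = (if c = 1 then - sqrt (p / (1 - p)) else sqrt ((1 - p) / p))"

end

theory Submission
  imports Defs
begin


lemma exp_le_quad:
  fixes y :: real assumes "\<bar>y\<bar> \<le> 1" shows "exp y \<le> 1 + y + y\<^sup>2"
proof (cases "y \<ge> 0")
  case True then show ?thesis using assms exp_bound by auto
next
  case False
  define u where "u = -y"
  have u: "0 \<le> u" "u \<le> 1" using False assms by (auto simp: u_def)
  have e: "1 + u + u\<^sup>2 / 2 \<le> exp u" using exp_lower_Taylor_quadratic u by auto
  have pos: "0 < 1 + u + u\<^sup>2 / 2" using u by (simp add: add_pos_nonneg)
  have prod: "1 \<le> (1 - u + u\<^sup>2) * (1 + u + u\<^sup>2 / 2)"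
  proof -
    have "(1 - u + u\<^sup>2) * (1 + u + u\<^sup>2 / 2) = 1 + u\<^sup>2/2 + u^3/2 + u^4/2"
      by (simp add: field_simps power2_eq_square power3_eq_cube power4_eq_xxxx)
    moreover have "0 \<le> u\<^sup>2/2 + u^3/2 + u^4/2" using u by simp
    ultimately show ?thesis by linarith
  qed
  have "exp y = 1 / exp u" by (simp add: u_def exp_minus field_simps)
  also have "\<dots> \<le> 1 / (1 + u + u\<^sup>2 / 2)" using e pos by (intro divide_left_mono) auto
  also have "\<dots> \<le> 1 - u + u\<^sup>2" using prod pos by (simp add: divide_simps)
  finally show ?thesis by (simp add: u_def)
qed

lemma mgf_real:
  fixes p a t :: real
  assumes p: "0 < p" "p < 1" and a: "\<bar>a\<bar> \<le> 1" and t: "0 \<le> t"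
    and b1: "t\<^sup>2 * (p / (1 - p)) \<le> 1" and b2: "t\<^sup>2 * ((1 - p) / p) \<le> 1"
  shows "(1 - p) * exp (t * (a * - sqrt (p / (1 - p)))) + p * exp (t * (a * sqrt ((1 - p) / p))) \<le> exp (t\<^sup>2)"
proof -
  define s where "s = sqrt (p / (1 - p))"
  define r where "r = sqrt ((1 - p) / p)"
  have s2: "s\<^sup>2 = p / (1 - p)" using p by (simp add: s_def)
  have r2: "r\<^sup>2 = (1 - p) / p" using p by (simp add: r_def)
  have spos: "s > 0" using p by (simp add: s_def)
  have rs: "r = 1 / s" using p by (simp add: r_def s_def real_sqrt_divide)
  have "\<bar>a\<bar>\<^sup>2 \<le> 1" using a by (intro power_le_one) auto
  hence a2: "a\<^sup>2 \<le> 1" by simp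
  define y1 where "y1 = t * (a * - s)"
  define y2 where "y2 = t * (a * r)"
  have "y1\<^sup>2 = a\<^sup>2 * (t\<^sup>2 * s\<^sup>2)" by (simp add: y1_def power_mult_distrib)
  also have "\<dots> \<le> 1 * 1" using a2 b1 s2 p by (intro mult_mono) auto
  finally have "\<bar>y1\<bar> \<le> 1" by (simp add: abs_square_le_1)
  hence e1: "exp y1 \<le> 1 + y1 + y1\<^sup>2" by (rule exp_le_quad)
  have "y2\<^sup>2 = a\<^sup>2 * (t\<^sup>2 * r\<^sup>2)" by (simp add: y2_def power_mult_distrib)
  also have "\<dots> \<le> 1 * 1" using a2 b2 r2 p by (intro mult_mono) auto
  finally have "\<bar>y2\<bar> \<le> 1" by (simp add: abs_square_le_1)
  hence e2: "exp y2 \<le> 1 + y2 + y2\<^sup>2" by (rule exp_le_quad)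
  have "(1 - p) * exp y1 + p * exp y2 \<le> (1 - p) * (1 + y1 + y1\<^sup>2) + p * (1 + y2 + y2\<^sup>2)"
    using e1 e2 p by (intro add_mono mult_left_mono) auto
  also have "(1 - p) * (1 + y1 + y1\<^sup>2) + p * (1 + y2 + y2\<^sup>2)
      = 1 + t * a * (p * r - (1 - p) * s) + t\<^sup>2 * a\<^sup>2 * ((1 - p) * s\<^sup>2 + p * r\<^sup>2)"
    by (simp add: y1_def y2_def algebra_simps power2_eq_square)
  also have "p * r - (1 - p) * s = 0"
  proof -
    have "p * r = p * s / s\<^sup>2" using spos by (simp add: rs power2_eq_square)
    also have "\<dots> = p * s / (p / (1 - p))" using s2 by simp
    also have "\<dots> = (1 - p) * s" using p by (simp add: field_simps)
    finally show ?thesis by simp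
  qed
  also have "(1 - p) * s\<^sup>2 + p * r\<^sup>2 = 1" using p s2 r2 by (simp add: field_simps)
  also have "1 + t * a * 0 + t\<^sup>2 * a\<^sup>2 * 1 \<le> 1 + t\<^sup>2"
    using a2 mult_left_mono[OF a2, of "t\<^sup>2"] by simp
  also have "\<dots> \<le> exp (t\<^sup>2)" by (rule exp_ge_add_one_self)
  finally show ?thesis by (simp add: y1_def y2_def s_def r_def)
qed

lemma (in prob_space) mgf_two_valued:
  fixes V :: "'a \<Rightarrow> real"
  assumes [measurable]: "V \<in> borel_measurable M"
  shows "(\<integral>\<^sup>+x. ennreal (exp (t * g (if V x \<noteq> 0 then (1::real) else -1))) \<partial>M)
       = ennreal ((1 - prob {x\<in>space M. V x = 0}) * exp (t * g 1) + prob {x\<in>space M. V x = 0} * exp (t * g (-1)))"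
proof -
  define A where "A = {x\<in>space M. V x = 0}"
  have "A = V -` {0} \<inter> space M" unfolding A_def by auto
  hence A[measurable]: "A \<in> sets M" using measurable_sets[OF assms borel_closed[OF closed_singleton[of "0::real"]]] by simp
  define e1 where "e1 = exp (t * g 1)"
  define e2 where "e2 = exp (t * g (-1))"
  have "(\<integral>\<^sup>+x. ennreal (exp (t * g (if V x \<noteq> 0 then (1::real) else -1))) \<partial>M)
      = (\<integral>\<^sup>+x. ennreal e2 * indicator A x + ennreal e1 * indicator (space M - A) x \<partial>M)"
    by (intro nn_integral_cong) (auto simp: A_def e1_def e2_def indicator_def)
  also have "\<dots> = (\<integral>\<^sup>+x. ennreal e2 * indicator A x \<partial>M) + (\<integral>\<^sup>+x. ennreal e1 * indicator (space M - A) x \<partial>M)"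
    by (rule nn_integral_add) measurable
  also have "\<dots> = ennreal e2 * emeasure M A + ennreal e1 * emeasure M (space M - A)"
    by (simp add: nn_integral_cmult_indicator)
  also have "emeasure M (space M - A) = ennreal (1 - prob A)"
    using prob_compl[OF A] by (simp add: emeasure_eq_measure)
  also have "emeasure M A = ennreal (prob A)" by (simp add: emeasure_eq_measure)
  also have "ennreal e2 * ennreal (prob A) + ennreal e1 * ennreal (1 - prob A)
      = ennreal ((1 - prob A) * e1 + prob A * e2)"
    by (simp add: e1_def e2_def ennreal_mult' ennreal_plus[symmetric] mult.commute)
  finally show ?thesis by (simp add: A_def e1_def e2_def)
qed

lemma (in prob_space) chernoff_sum:
  fixes X :: "'i \<Rightarrow> 'a \<Rightarrow> real"
  assumes fin: "finite I" and indep: "indep_vars (\<lambda>_. borel) X I" and t: "t > 0"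
    and mgf: "\<And>i. i \<in> I \<Longrightarrow> (\<integral>\<^sup>+x. ennreal (exp (t * X i x)) \<partial>M) \<le> ennreal (exp (t\<^sup>2))"
  shows "prob {x\<in>space M. (\<Sum>i\<in>I. X i x) \<ge> lam} \<le> exp (- t * lam + real (card I) * t\<^sup>2)"
proof -
  have [measurable]: "\<And>i. i \<in> I \<Longrightarrow> X i \<in> borel_measurable M"
    using indep unfolding indep_vars_def by blast
  have meas: "(\<lambda>x. (\<Sum>i\<in>I. X i x)) \<in> borel_measurable M" by measurable
  have "ennreal (prob {x\<in>space M. (\<Sum>i\<in>I. X i x) \<ge> lam}) = emeasure M {x\<in>space M. (\<Sum>i\<in>I. X i x) \<ge> lam}"
    by (simp add: emeasure_eq_measure)
  also have "\<dots> \<le> ennreal (exp (-t*lam)) * (\<integral>\<^sup>+x. ennreal (exp (t * (\<Sum>i\<in>I. X i x))) * indicator (space M) x \<partial>M)"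
    by (intro Chernoff_ineq_nn_integral_ge t) (use meas in auto)
  also have "(\<integral>\<^sup>+x. ennreal (exp (t * (\<Sum>i\<in>I. X i x))) * indicator (space M) x \<partial>M)
      = (\<integral>\<^sup>+x. (\<Prod>i\<in>I. ennreal (exp (t * X i x))) \<partial>M)"
    by (intro nn_integral_cong)
       (simp_all add: sum_distrib_left exp_sum fin prod_ennreal)
  also have "\<dots> = (\<Prod>i\<in>I. \<integral>\<^sup>+x. ennreal (exp (t * X i x)) \<partial>M)"
    by (intro indep_vars_nn_integral fin indep_vars_compose2[OF indep]) auto
  also have "ennreal (exp (-t*lam)) * \<dots> \<le> ennreal (exp (-t*lam)) * (\<Prod>i\<in>I. ennreal (exp (t\<^sup>2)))"
    by (intro mult_left_mono prod_mono_ennreal mgf) auto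
  also have "\<dots> = ennreal (exp (-t*lam) * (\<Prod>i\<in>I. exp (t\<^sup>2)))"
    by (simp add: prod_ennreal prod_nonneg ennreal_power flip: ennreal_mult)
  also have "exp (-t*lam) * (\<Prod>i\<in>I. exp (t\<^sup>2)) = exp (- t * lam + real (card I) * t\<^sup>2)"
    by (simp add: algebra_simps flip: exp_of_nat_mult exp_add)
  finally show ?thesis
    by (subst (asm) ennreal_le_iff) simp_all
qed


theorem mainTheorem10:
  fixes M :: "'a measure" and v :: "nat \<Rightarrow> 'a \<Rightarrow> real"
    and p a :: "nat \<Rightarrow> real" and m :: nat and \<alpha> \<beta> \<tau> lam :: real
  assumes "prob_space M"
    and "0 < \<alpha>" "\<alpha> < \<beta>" "\<beta> < 1"
    and "\<tau> = min \<alpha> (1 - \<beta>)"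
    and "\<forall>j\<in>{1..m}. p j \<in> {\<alpha>..\<beta>}"
    and "prob_space.indep_vars M (\<lambda>_. borel) v {1..m}"
    and "\<forall>j\<in>{1..m}. measure M {x \<in> space M. v j x = 0} = p j"
    and "\<forall>j\<in>{1..m}. a j \<in> {-1..1}"
    and "lam \<ge> 0"
  shows "measure M {x \<in> space M.
           (\<Sum>j\<in>{1..m}. a j * phi (p j) (if v j x \<noteq> 0 then 1 else -1)) \<ge> lam}
         \<le> exp (- lam\<^sup>2 / (4 * real m)) + exp (- sqrt \<tau> * lam / 4)"
proof -
  interpret prob_space M by (rule assms(1))
  have tau: "\<tau> > 0" "\<tau> \<le> \<alpha>" "\<tau> \<le> 1 - \<beta>" using assms(2-5) by auto
  define X where "X = (\<lambda>j x. a j * phi (p j) (if v j x \<noteq> 0 then 1 else -1))"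
  have indep: "indep_vars (\<lambda>_. borel) X {1..m}"
    unfolding X_def
    by (rule indep_vars_compose2[OF assms(7), where Y = "\<lambda>j y. a j * phi (p j) (if y \<noteq> 0 then 1 else -1)"])
       (unfold phi_def, measurable)
  have vmeas: "\<And>j. j \<in> {1..m} \<Longrightarrow> v j \<in> borel_measurable M"
    using assms(7) unfolding indep_vars_def by blast
  have bound: "prob {x\<in>space M. (\<Sum>j\<in>{1..m}. X j x) \<ge> lam} \<le> exp (- t * lam + real m * t\<^sup>2)"
    if t: "0 < t" "t \<le> sqrt \<tau>" for t
  proof -
    have t2: "t\<^sup>2 \<le> \<tau>" using t tau
      by (metis less_eq_real_def power_mono real_sqrt_pow2)
    have "prob {x\<in>space M. (\<Sum>j\<in>{1..m}. X j x) \<ge> lam} \<le> exp (- t * lam + real (card {1..m}) * t\<^sup>2)"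
    proof (rule chernoff_sum[OF _ indep t(1)])
      fix j assume j: "j \<in> {1..m}"
      have pj: "\<alpha> \<le> p j" "p j \<le> \<beta>" using assms(6) j by auto
      have p0: "0 < p j" "p j < 1" using pj assms(2-4) by auto
      have aj: "\<bar>a j\<bar> \<le> 1" using assms(9) j by (auto simp: abs_le_iff)
      have "(\<integral>\<^sup>+x. ennreal (exp (t * X j x)) \<partial>M)
          = ennreal ((1 - prob {x\<in>space M. v j x = 0}) * exp (t * (a j * phi (p j) 1))
                    + prob {x\<in>space M. v j x = 0} * exp (t * (a j * phi (p j) (-1))))"
        unfolding X_def by (rule mgf_two_valued[OF vmeas[OF j], where g = "\<lambda>c. a j * phi (p j) c"])
      also have "prob {x\<in>space M. v j x = 0} = p j" using assms(8) j by auto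
      also have "phi (p j) 1 = - sqrt (p j / (1 - p j))" by (simp add: phi_def)
      also have "phi (p j) (-1) = sqrt ((1 - p j) / p j)" by (simp add: phi_def)
      also have "(1 - p j) * exp (t * (a j * - sqrt (p j / (1 - p j)))) + p j * exp (t * (a j * sqrt ((1 - p j) / p j)))
          \<le> exp (t\<^sup>2)"
      proof (rule mgf_real[OF p0 aj])
        show "0 \<le> t" using t by simp
        have "p j / (1 - p j) \<le> 1 / (1 - p j)" using p0 by (intro divide_right_mono) auto
        also have "\<dots> \<le> 1 / \<tau>" using tau pj by (intro divide_left_mono) auto
        finally have "p j / (1 - p j) \<le> 1 / \<tau>" .
        hence "t\<^sup>2 * (p j / (1 - p j)) \<le> \<tau> * (1 / \<tau>)"
          using t2 p0 tau by (intro mult_mono) auto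
        thus "t\<^sup>2 * (p j / (1 - p j)) \<le> 1" using tau by simp
        have "(1 - p j) / p j \<le> 1 / p j" using p0 by (intro divide_right_mono) auto
        also have "\<dots> \<le> 1 / \<tau>" using tau pj by (intro divide_left_mono) auto
        finally have "(1 - p j) / p j \<le> 1 / \<tau>" .
        hence "t\<^sup>2 * ((1 - p j) / p j) \<le> \<tau> * (1 / \<tau>)"
          using t2 p0 tau by (intro mult_mono) auto
        thus "t\<^sup>2 * ((1 - p j) / p j) \<le> 1" using tau by simp
      qed
      finally show "(\<integral>\<^sup>+x. ennreal (exp (t * X j x)) \<partial>M) \<le> ennreal (exp (t\<^sup>2))"
        by (simp add: ennreal_leI)
    qed simp
    thus ?thesis by simp
  qed
  have goal: "prob {x\<in>space M. (\<Sum>j\<in>{1..m}. X j x) \<ge> lam}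
      \<le> exp (- lam\<^sup>2 / (4 * real m)) + exp (- sqrt \<tau> * lam / 4)"
  proof (cases "lam = 0")
    case True
    have "prob {x\<in>space M. (\<Sum>j\<in>{1..m}. X j x) \<ge> lam} \<le> 1" by simp
    also have "1 \<le> exp (- lam\<^sup>2 / (4 * real m)) + exp (- sqrt \<tau> * lam / 4)"
      using True by simp
    finally show ?thesis .
  next
    case False
    hence lam: "lam > 0" using assms(10) by simp
    have st: "sqrt \<tau> > 0" using tau by simp
    show ?thesis
    proof (cases "m > 0 \<and> lam / (2 * real m) \<le> sqrt \<tau>")
      case True
      define t where "t = lam / (2 * real m)"
      have "t > 0" using True lam by (simp add: t_def)
      hence "prob {x\<in>space M. (\<Sum>j\<in>{1..m}. X j x) \<ge> lam} \<le> exp (- t * lam + real m * t\<^sup>2)"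
        using True by (intro bound) (auto simp: t_def)
      also have "- t * lam + real m * t\<^sup>2 = - lam\<^sup>2 / (4 * real m)"
        using True by (simp add: t_def field_simps power2_eq_square)
      also have "exp (- lam\<^sup>2 / (4 * real m)) \<le> exp (- lam\<^sup>2 / (4 * real m)) + exp (- sqrt \<tau> * lam / 4)"
        by simp
      finally show ?thesis .
    next
      case False
      have "prob {x\<in>space M. (\<Sum>j\<in>{1..m}. X j x) \<ge> lam} \<le> exp (- sqrt \<tau> * lam + real m * (sqrt \<tau>)\<^sup>2)"
        using st by (intro bound) auto
      also have "- sqrt \<tau> * lam + real m * (sqrt \<tau>)\<^sup>2 \<le> - sqrt \<tau> * lam / 4"
      proof (cases "m = 0")
        case True thus ?thesis using st lam by simp
      next
        case m: False
        hence "2 * real m * sqrt \<tau> < lam" using False by (simp add: field_simps)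
        hence "real m * (sqrt \<tau>)\<^sup>2 \<le> sqrt \<tau> * lam / 2"
        proof -
          have "real m * sqrt \<tau> \<le> lam / 2" using \<open>2 * real m * sqrt \<tau> < lam\<close> by linarith
          hence "sqrt \<tau> * (real m * sqrt \<tau>) \<le> sqrt \<tau> * (lam / 2)" using st by (intro mult_left_mono) auto
          thus ?thesis by (simp add: power2_eq_square mult_ac)
        qed
        moreover have "0 \<le> sqrt \<tau> * lam" using st lam by simp
        ultimately show ?thesis by linarith
      qed
      hence "exp (- sqrt \<tau> * lam + real m * (sqrt \<tau>)\<^sup>2) \<le> exp (- sqrt \<tau> * lam / 4)" by simp
      also have "\<dots> \<le> exp (- lam\<^sup>2 / (4 * real m)) + exp (- sqrt \<tau> * lam / 4)" by simp
      finally show ?thesis .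
    qed
  qed
  thus ?thesis by (simp add: X_def)
qed

end
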